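(* Let $G$ be a graph with $n$ nodes and graph Laplacian $\mathbf{L}$, and let $\mathbf{L}=\mathbf{U}\mathbf{\Sigma}\mathbf{U}^T$ be an eigendecomposition of $\mathbf{L}$. Then for any $n\times n$ permutation matrix $\mathbf{M}$, the matrix $\mathbf{U}\mathbf{\Sigma}^{1/2}\mathbf{M}$ is adjacency-identifying.
   Context: Graphs are finite, undirected, without self-loops and without isolated nodes; $\mathbf{L}=\mathbf{D}-\mathbf{A}(G)$ with $\mathbf{D}$ the degree matrix and $\mathbf{A}(G)$ the adjacency matrix. In the eigendecomposition, $\mathbf{U}$ is orthogonal (columns are orthonormal eigenvectors) and $\mathbf{\Sigma}$ is diagonal with the (nonnegative) eigenvalues. $d_k>0$ is a fixed constant. A matrix $\mathbf{P}\in\mathbb{R}^{n\times e}$ is adjacency-identifying if there exist $\mathbf{W}^Q,\mathbf{W}^K\in\mathbb{R}^{e\times e}$ such that $\tilde{\mathbf{P}}=\frac{1}{\sqrt{d_k}}\mathbf{P}\mathbf{W}^Q(\mathbf{P}\mathbf{W}^K)^T$ satisfies $\tilde{\mathbf{P}}_{ij}=\max_k\tilde{\mathbf{P}}_{ik}\iff\mathbf{A}(G)_{ij}=1$ for all $i,j$. *)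

theory Defs
  imports "HOL-Analysis.Analysis" "HOL-Combinatorics.Permutations"
begin

definition simple_graph_no_isolated :: "('n::finite \<Rightarrow> 'n \<Rightarrow> bool) \<Rightarrow> bool" where
  "simple_graph_no_isolated E \<longleftrightarrow>
     (\<forall>i j. E i j \<longleftrightarrow> E j i) \<and> (\<forall>i. \<not> E i i) \<and> (\<forall>i. \<exists>j. E i j)"

definition adj_matrix :: "('n::finite \<Rightarrow> 'n \<Rightarrow> bool) \<Rightarrow> real^'n^'n" where
  "adj_matrix E = (\<chi> i j. if E i j then 1 else 0)"

definition degree_matrix :: "('n::finite \<Rightarrow> 'n \<Rightarrow> bool) \<Rightarrow> real^'n^'n" where
  "degree_matrix E = (\<chi> i j. if i = j then (\<Sum>k\<in>UNIV. adj_matrix E $ i $ k) else 0)"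

definition laplacian :: "('n::finite \<Rightarrow> 'n \<Rightarrow> bool) \<Rightarrow> real^'n^'n" where
  "laplacian E = degree_matrix E - adj_matrix E"

definition is_diagonal :: "real^'n^'n \<Rightarrow> bool" where
  "is_diagonal S \<longleftrightarrow> (\<forall>i j. i \<noteq> j \<longrightarrow> S $ i $ j = 0)"

definition is_eigendecomposition :: "real^'n^'n \<Rightarrow> real^'n^'n \<Rightarrow> real^'n^'n \<Rightarrow> bool" where
  "is_eigendecomposition L U S \<longleftrightarrow>
     orthogonal_matrix U \<and> is_diagonal S \<and> (\<forall>i. S $ i $ i \<ge> 0) \<and>
     L = U ** S ** transpose U"

definition diag_sqrt :: "real^'n^'n \<Rightarrow> real^'n^'n" where
  "diag_sqrt S = (\<chi> i j. if i = j then sqrt (S $ i $ i) else 0)"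

definition permutation_matrix :: "real^'n^'n \<Rightarrow> bool" where
  "permutation_matrix M \<longleftrightarrow>
     (\<exists>p. p permutes (UNIV :: 'n set) \<and> M = (\<chi> i j. if p i = j then 1 else 0))"

definition adjacency_identifying ::
    "real \<Rightarrow> ('n::finite \<Rightarrow> 'n \<Rightarrow> bool) \<Rightarrow> real^'e::finite^'n \<Rightarrow> bool" where
  "adjacency_identifying dk E P \<longleftrightarrow>
     (\<exists>WQ WK :: real^'e^'e.
        let Pt = (1 / sqrt dk) *\<^sub>R ((P ** WQ) ** transpose (P ** WK)) in
        \<forall>i j. Pt $ i $ j = Max (range (\<lambda>k. Pt $ i $ k)) \<longleftrightarrow> adj_matrix E $ i $ j = 1)"

end

theory Submission
  imports Defs
begin

lemma perm_MMt:
  assumes "permutation_matrix (M::real^'n::finite^'n)"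
  shows "M ** transpose M = mat 1"
proof -
  obtain p where p: "p permutes (UNIV::'n set)" "M = (\<chi> i j. if p i = j then 1 else 0)"
    using assms unfolding permutation_matrix_def by blast
  have inj: "inj p" using p(1) permutes_inj by blast
  show ?thesis
  proof (rule vec_eq_iff[THEN iffD2], intro allI, rule vec_eq_iff[THEN iffD2], intro allI)
    fix i j
    have "(M ** transpose M) $ i $ j = (\<Sum>k\<in>UNIV. (if p i = k then 1 else 0) * (if p j = k then (1::real) else 0))"
      by (simp add: matrix_matrix_mult_def transpose_def p(2))
    also have "\<dots> = (\<Sum>k\<in>UNIV. if k = p i then (if p j = p i then 1 else 0) else 0)"
      by (rule sum.cong) auto
    also have "\<dots> = (if i = j then 1 else 0)" using inj by (auto dest: injD)
    finally show "(M ** transpose M) $ i $ j = mat 1 $ i $ j" by (simp add: mat_def)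
  qed
qed

lemma diag_sqrt_sq:
  assumes "is_diagonal S" "\<forall>i. S $ i $ i \<ge> 0"
  shows "diag_sqrt S ** diag_sqrt S = (S::real^'n::finite^'n)"
proof (rule vec_eq_iff[THEN iffD2], intro allI, rule vec_eq_iff[THEN iffD2], intro allI)
  fix i j
  have "(diag_sqrt S ** diag_sqrt S) $ i $ j = (\<Sum>k\<in>UNIV. (if i = k then sqrt (S$i$i) else 0) * (if k = j then sqrt (S$k$k) else 0))"
    by (simp add: matrix_matrix_mult_def diag_sqrt_def)
  also have "\<dots> = (\<Sum>k\<in>UNIV. if k = i then (if i = j then sqrt (S$i$i) * sqrt (S$i$i) else 0) else 0)"
    by (rule sum.cong) auto
  also have "\<dots> = S $ i $ j" using assms unfolding is_diagonal_def
    by (auto simp: real_sqrt_mult[symmetric])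
  finally show "(diag_sqrt S ** diag_sqrt S) $ i $ j = S $ i $ j" .
qed

lemma diag_sqrt_sym: "transpose (diag_sqrt S) = diag_sqrt S"
  by (simp add: transpose_def diag_sqrt_def vec_eq_iff)

theorem lemmaF9:
  fixes E :: "'n::finite \<Rightarrow> 'n \<Rightarrow> bool"
    and U S M :: "real^'n^'n"
    and dk :: real
  assumes "dk > 0"
    and "simple_graph_no_isolated E"
    and "is_eigendecomposition (laplacian E) U S"
    and "permutation_matrix M"
  shows "adjacency_identifying dk E (U ** diag_sqrt S ** M)"
proof -
  define P where "P = U ** diag_sqrt S ** M"
  define D where "D = diag_sqrt S"
  have ed: "is_diagonal S" "\<forall>i. S $ i $ i \<ge> 0" "laplacian E = U ** S ** transpose U"
    using assms(3) unfolding is_eigendecomposition_def by auto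
  have PP: "P ** transpose P = laplacian E"
  proof -
    have "P ** transpose P = U ** D ** (M ** transpose M) ** transpose D ** transpose U"
      unfolding P_def D_def by (simp add: matrix_transpose_mul matrix_mul_assoc)
    also have "\<dots> = U ** (D ** D) ** transpose U"
      by (simp add: perm_MMt[OF assms(4)] D_def diag_sqrt_sym matrix_mul_assoc)
    also have "\<dots> = laplacian E" using diag_sqrt_sq[OF ed(1,2)] ed(3) D_def by simp
    finally show ?thesis .
  qed
  define c where "c = 1 / sqrt dk"
  have c: "c > 0" using assms(1) by (simp add: c_def)
  define Pt where "Pt = (1 / sqrt dk) *\<^sub>R ((P ** mat 1) ** transpose (P ** (- mat 1)))"
  have Pt: "Pt = - (c *\<^sub>R laplacian E)"
  proof -
    have "P ** (- mat 1) = - P"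
      by (simp add: vec_eq_iff matrix_matrix_mult_def mat_def if_distrib cong: if_cong)
    moreover have "transpose (- P) = - transpose P" by (simp add: transpose_def vec_eq_iff)
    moreover have "P ** (- transpose P) = - (P ** transpose P)"
      by (simp add: vec_eq_iff matrix_matrix_mult_def sum_negf)
    ultimately show ?thesis unfolding Pt_def c_def using PP by simp
  qed
  have G: "\<And>i j. E i j \<longleftrightarrow> E j i" "\<And>i. \<not> E i i" "\<And>i. \<exists>j. E i j"
    using assms(2) unfolding simple_graph_no_isolated_def by auto
  define deg where "deg i = (\<Sum>k\<in>UNIV. adj_matrix E $ i $ k)" for i
  have degpos: "deg i > 0" for i
  proof -
    obtain j where "E i j" using G(3) by blast
    have "deg i \<ge> adj_matrix E $ i $ j"
      unfolding deg_def by (rule member_le_sum) (auto simp: adj_matrix_def)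
    moreover have "adj_matrix E $ i $ j = 1" using \<open>E i j\<close> by (simp add: adj_matrix_def)
    ultimately show ?thesis by simp
  qed
  have Ptij: "Pt $ i $ j = (if i = j then - c * deg i else if E i j then c else 0)" for i j
    using G(2) by (auto simp: Pt laplacian_def degree_matrix_def adj_matrix_def deg_def)
  have Mx: "Max (range (\<lambda>k. Pt $ i $ k)) = c" for i
  proof (rule Max_eqI)
    show "finite (range (\<lambda>k. Pt $ i $ k))" by simp
    fix y assume "y \<in> range (\<lambda>k. Pt $ i $ k)"
    then obtain k where "y = Pt $ i $ k" by blast
    have "c * deg i > 0" using c degpos[of i] by simp
    then show "y \<le> c" using c \<open>y = Pt $ i $ k\<close> unfolding Ptij
      by (cases "i = k"; cases "E i k") simp_all
  next
    obtain j where "E i j" using G(3) by blast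
    then have "Pt $ i $ j = c" using G(2) by (auto simp: Ptij)
    then show "c \<in> range (\<lambda>k. Pt $ i $ k)" by (metis rangeI)
  qed
  have "\<forall>i j. Pt $ i $ j = Max (range (\<lambda>k. Pt $ i $ k)) \<longleftrightarrow> adj_matrix E $ i $ j = 1"
  proof (intro allI)
    fix i j
    have "c * deg i > 0" using c degpos[of i] by simp
    then have ne: "- c * deg i \<noteq> c" using c by linarith
    show "Pt $ i $ j = Max (range (\<lambda>k. Pt $ i $ k)) \<longleftrightarrow> adj_matrix E $ i $ j = 1"
      unfolding Mx unfolding Ptij adj_matrix_def using ne c G(2)[of i]
      by (cases "i = j"; cases "E i j") simp_all
  qed
  then show ?thesis unfolding adjacency_identifying_def P_def[symmetric] Let_def
    by (intro exI[of _ "mat 1"] exI[of _ "- mat 1"]) (simp add: Pt_def)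
qed

end
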